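(* Let $k$ be a commutative ring, $R$ a reduced (not necessarily commutative) $k$-algebra and $\overline R=(R,\Gamma,\{R_\gamma\}_{\gamma\in\Gamma})$ a grid-grading of $R$ such that $X=\{\gamma\in\Gamma: R_\gamma\neq 0\}$ is finite. Then: (1) for each $\gamma\in X$, the subgrid $\langle\gamma\rangle$ of $\Gamma$ generated by $\gamma$ is contained in $X$ and is a finite cyclic group; (2) if $R_1$ is a domain, then for every $\gamma\in\Gamma$ every nonzero $x\in R_\gamma$ is regular (i.e. $xy=0$ or $yx=0$ implies $y=0$), and $X=\langle X\rangle$ is a group (under the restriction of $*$); if moreover $R$ is commutative, this group is abelian; (3) if $R_1$ is a field, then for every $\gamma\in\Gamma$ every nonzero $x\in R_\gamma$ is invertible in $R$ with $x^{-1}\in R_{\gamma^{-1}}$, and $\dim_{R_1}R_\gamma=1$ for all $\gamma\in X$ (viewing $R_\gamma$ as a left $R_1$-module).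
   Context: A grid is a quadruple $G=(S,1,D,* )$ where $S$ is a set containing $1$, $D\subseteq S^2$ contains $(1,s),(s,1)$ for all $s$, $*:D\to S$ satisfies $s*1=1*s=s$, and $s*s=s$ implies $s=1$. A subgrid of $G$ is a grid $(T,1,E,\star)$ with $T\subseteq S$, $E=D\cap T^2$ and $\star=*|_E$; $\langle Y\rangle$ denotes the smallest subgrid containing $Y\subseteq S$. A grid-grading of a $k$-algebra $R$ is a triple $(R,G,\{R_g\}_{g\in G})$ with $\{R_g\}$ a family of $k$-submodules such that $\bigoplus_g R_g\to R$ is an isomorphism, $1\in R_1$, and whenever $R_gR_h\ne0$ the product $g*h$ is defined and $R_gR_h\subseteq R_{g*h}$. $R_1$ is then a subalgebra. Reduced means no nonzero nilpotent elements. *)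

theory Defs
  imports "HOL-Algebra.Generated_Groups"
begin

text \<open>Grid (S, e, D, op): the partial operation is a total HOL function op, meaningful on D.\<close>
definition grid :: "'g set \<Rightarrow> 'g \<Rightarrow> ('g \<times> 'g) set \<Rightarrow> ('g \<Rightarrow> 'g \<Rightarrow> 'g) \<Rightarrow> bool" where
  "grid S e D op \<longleftrightarrow> e \<in> S \<and> D \<subseteq> S \<times> S
     \<and> (\<forall>s\<in>S. (e, s) \<in> D \<and> (s, e) \<in> D \<and> op s e = s \<and> op e s = s)
     \<and> (\<forall>(a, b)\<in>D. op a b \<in> S)
     \<and> (\<forall>s\<in>S. (s, s) \<in> D \<and> op s s = s \<longrightarrow> s = e)"

definition subgrid :: "'g set \<Rightarrow> 'g \<Rightarrow> ('g \<times> 'g) set \<Rightarrow> ('g \<Rightarrow> 'g \<Rightarrow> 'g) \<Rightarrow> 'g set \<Rightarrow> bool" where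
  "subgrid S e D op T \<longleftrightarrow> T \<subseteq> S \<and> grid T e (D \<inter> (T \<times> T)) op"

definition grid_gen :: "'g set \<Rightarrow> 'g \<Rightarrow> ('g \<times> 'g) set \<Rightarrow> ('g \<Rightarrow> 'g \<Rightarrow> 'g) \<Rightarrow> 'g set \<Rightarrow> 'g set" where
  "grid_gen S e D op Y = \<Inter> {T. subgrid S e D op T \<and> Y \<subseteq> T}"

definition grid_monoid :: "'g \<Rightarrow> ('g \<Rightarrow> 'g \<Rightarrow> 'g) \<Rightarrow> 'g set \<Rightarrow> 'g monoid" where
  "grid_monoid e op T = \<lparr>carrier = T, mult = op, one = e\<rparr>"

definition grid_group :: "'g \<Rightarrow> ('g \<times> 'g) set \<Rightarrow> ('g \<Rightarrow> 'g \<Rightarrow> 'g) \<Rightarrow> 'g set \<Rightarrow> bool" where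
  "grid_group e D op T \<longleftrightarrow> T \<times> T \<subseteq> D \<and> group (grid_monoid e op T)"

definition finite_cyclic_grid_group :: "'g \<Rightarrow> ('g \<times> 'g) set \<Rightarrow> ('g \<Rightarrow> 'g \<Rightarrow> 'g) \<Rightarrow> 'g set \<Rightarrow> bool" where
  "finite_cyclic_grid_group e D op T \<longleftrightarrow> finite T \<and> grid_group e D op T
     \<and> (\<exists>g\<in>T. T = generate (grid_monoid e op T) {g})"

definition k_algebra :: "('k::comm_ring_1 \<Rightarrow> 'r::ring_1 \<Rightarrow> 'r) \<Rightarrow> bool" where
  "k_algebra sm \<longleftrightarrow>
     (\<forall>a b x. sm (a + b) x = sm a x + sm b x)
   \<and> (\<forall>a x y. sm a (x + y) = sm a x + sm a y)
   \<and> (\<forall>a b x. sm (a * b) x = sm a (sm b x))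
   \<and> (\<forall>x. sm 1 x = x)
   \<and> (\<forall>a x y. sm a (x * y) = sm a x * y \<and> sm a (x * y) = x * sm a y)"

definition k_submodule :: "('k \<Rightarrow> 'r::ring_1 \<Rightarrow> 'r) \<Rightarrow> 'r set \<Rightarrow> bool" where
  "k_submodule sm M \<longleftrightarrow> 0 \<in> M \<and> (\<forall>x\<in>M. \<forall>y\<in>M. x + y \<in> M) \<and> (\<forall>a. \<forall>x\<in>M. sm a x \<in> M)"

definition reduced :: "'r::ring_1 itself \<Rightarrow> bool" where
  "reduced _ \<longleftrightarrow> (\<forall>x::'r. \<forall>n::nat. x ^ n = 0 \<longrightarrow> x = 0)"

text \<open>The canonical map from the external direct sum to R is bijective.\<close>
definition internal_direct_sum :: "'g set \<Rightarrow> ('g \<Rightarrow> 'r::ring_1 set) \<Rightarrow> bool" where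
  "internal_direct_sum Gam Rg \<longleftrightarrow>
    (\<forall>x::'r. \<exists>!c::'g \<Rightarrow> 'r. (\<forall>g. g \<notin> Gam \<longrightarrow> c g = 0) \<and> finite {g. c g \<noteq> 0}
        \<and> (\<forall>g\<in>Gam. c g \<in> Rg g) \<and> x = (\<Sum>g\<in>{g. c g \<noteq> 0}. c g))"

definition grid_grading ::
  "('k::comm_ring_1 \<Rightarrow> 'r::ring_1 \<Rightarrow> 'r) \<Rightarrow> 'g set \<Rightarrow> 'g \<Rightarrow> ('g \<times> 'g) set \<Rightarrow> ('g \<Rightarrow> 'g \<Rightarrow> 'g)
    \<Rightarrow> ('g \<Rightarrow> 'r set) \<Rightarrow> bool" where
  "grid_grading sm Gam e D op Rg \<longleftrightarrow> grid Gam e D op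
     \<and> (\<forall>g\<in>Gam. k_submodule sm (Rg g))
     \<and> internal_direct_sum Gam Rg
     \<and> 1 \<in> Rg e
     \<and> (\<forall>g\<in>Gam. \<forall>h\<in>Gam. (\<exists>a\<in>Rg g. \<exists>b\<in>Rg h. a * b \<noteq> 0) \<longrightarrow>
          (g, h) \<in> D \<and> (\<forall>a\<in>Rg g. \<forall>b\<in>Rg h. a * b \<in> Rg (op g h)))"

definition domain_sub :: "'r::ring_1 set \<Rightarrow> bool" where
  "domain_sub A \<longleftrightarrow> (1::'r) \<noteq> 0 \<and> (\<forall>a\<in>A. \<forall>b\<in>A. a * b = 0 \<longrightarrow> a = 0 \<or> b = 0)"

definition field_sub :: "'r::ring_1 set \<Rightarrow> bool" where
  "field_sub A \<longleftrightarrow> (1::'r) \<noteq> 0 \<and> (\<forall>a\<in>A. \<forall>b\<in>A. a * b = b * a)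
     \<and> (\<forall>a\<in>A. a \<noteq> 0 \<longrightarrow> (\<exists>b\<in>A. a * b = 1))"

end

theory Submission
  imports Defs
begin


lemma grid_monoid_group:
  assumes "\<And>x y. x \<in> T \<Longrightarrow> y \<in> T \<Longrightarrow> op x y \<in> T"
    and "e \<in> T"
    and "\<And>x y z. x \<in> T \<Longrightarrow> y \<in> T \<Longrightarrow> z \<in> T \<Longrightarrow> op (op x y) z = op x (op y z)"
    and "\<And>x. x \<in> T \<Longrightarrow> op e x = x"
    and "\<And>x. x \<in> T \<Longrightarrow> \<exists>y\<in>T. op y x = e"
  shows "group (grid_monoid e op T)"
  by (rule groupI) (auto simp: grid_monoid_def assms)

lemma grid_monoid_comm_group:
  assumes "\<And>x y. x \<in> T \<Longrightarrow> y \<in> T \<Longrightarrow> op x y \<in> T"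
    and "e \<in> T"
    and "\<And>x y z. x \<in> T \<Longrightarrow> y \<in> T \<Longrightarrow> z \<in> T \<Longrightarrow> op (op x y) z = op x (op y z)"
    and "\<And>x y. x \<in> T \<Longrightarrow> y \<in> T \<Longrightarrow> op x y = op y x"
    and "\<And>x. x \<in> T \<Longrightarrow> op e x = x"
    and "\<And>x. x \<in> T \<Longrightarrow> \<exists>y\<in>T. op y x = e"
  shows "comm_group (grid_monoid e op T)"
  apply (rule comm_groupI)
  apply (simp_all only: grid_monoid_def monoid.simps partial_object.simps)
  using assms(1) apply blast
  using assms(2) apply blast
  using assms(3) apply blast
  using assms(4) apply blast
  using assms(5) apply blast
  using assms(6) apply blast
  done

lemma grid_gen_eqI:
  assumes "subgrid S e D op T" "Y \<subseteq> T" "\<And>U. subgrid S e D op U \<Longrightarrow> Y \<subseteq> U \<Longrightarrow> T \<subseteq> U"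
  shows "grid_gen S e D op Y = T"
  unfolding grid_gen_def using assms by blast

lemma subgridD:
  assumes "subgrid S e D op U"
  shows "e \<in> U" "\<And>a b. a \<in> U \<Longrightarrow> b \<in> U \<Longrightarrow> (a,b) \<in> D \<Longrightarrow> op a b \<in> U"
proof -
  have g: "grid U e (D \<inter> U \<times> U) op" using assms unfolding subgrid_def by blast
  show "e \<in> U" using g unfolding grid_def by blast
  fix a b assume "a \<in> U" "b \<in> U" "(a,b) \<in> D"
  hence "(a,b) \<in> D \<inter> U \<times> U" by blast
  moreover have "\<forall>(a, b)\<in>D \<inter> U \<times> U. op a b \<in> U" using g unfolding grid_def by blast
  ultimately show "op a b \<in> U" by blast
qed

lemma subgridI:
  assumes "grid S e D op" "T \<subseteq> S" "e \<in> T"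
    "\<And>a b. a \<in> T \<Longrightarrow> b \<in> T \<Longrightarrow> (a,b) \<in> D \<Longrightarrow> op a b \<in> T"
  shows "subgrid S e D op T"
proof -
  have g: "e \<in> S" "D \<subseteq> S \<times> S"
     "\<forall>s\<in>S. (e, s) \<in> D \<and> (s, e) \<in> D \<and> op s e = s \<and> op e s = s"
     "\<forall>s\<in>S. (s, s) \<in> D \<and> op s s = s \<longrightarrow> s = e"
    using assms(1) unfolding grid_def by blast+
  have "grid T e (D \<inter> T \<times> T) op"
    unfolding grid_def
  proof (intro conjI ballI)
    show "e \<in> T" by fact
    show "D \<inter> T \<times> T \<subseteq> T \<times> T" by blast
    fix s assume s: "s \<in> T"
    hence sS: "s \<in> S" using assms(2) by blast
    show "(e, s) \<in> D \<inter> T \<times> T" using g(3) sS s assms(3) by blast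
    show "(s, e) \<in> D \<inter> T \<times> T" using g(3) sS s assms(3) by blast
    show "op s e = s" using g(3) sS by blast
    show "op e s = s" using g(3) sS by blast
    show "(s, s) \<in> D \<inter> T \<times> T \<and> op s s = s \<longrightarrow> s = e" using g(4) sS by blast
  next
    fix z assume "z \<in> D \<inter> T \<times> T"
    then obtain a b where "z = (a,b)" "a \<in> T" "b \<in> T" "(a,b) \<in> D" by blast
    thus "case z of (a, b) \<Rightarrow> op a b \<in> T" using assms(4) by simp
  qed
  thus ?thesis unfolding subgrid_def using assms(2) by blast
qed

fun pw :: "('g \<Rightarrow> 'g \<Rightarrow> 'g) \<Rightarrow> 'g \<Rightarrow> 'g \<Rightarrow> nat \<Rightarrow> 'g" where
  "pw op e g 0 = e"
| "pw op e g (Suc n) = op (pw op e g n) g"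

locale GG =
  fixes sm :: "'k::comm_ring_1 \<Rightarrow> 'r::ring_1 \<Rightarrow> 'r"
    and Gam :: "'g set" and e :: 'g and D :: "('g \<times> 'g) set" and op :: "'g \<Rightarrow> 'g \<Rightarrow> 'g"
    and Rg :: "'g \<Rightarrow> 'r set"
  assumes red: "reduced TYPE('r)"
    and grad: "grid_grading sm Gam e D op Rg"
    and fin: "finite {g\<in>Gam. Rg g \<noteq> {0}}"
begin

abbreviation "X \<equiv> {g\<in>Gam. Rg g \<noteq> {0}}"

lemma grid: "grid Gam e D op" using grad unfolding grid_grading_def by auto
lemma e_in: "e \<in> Gam" using grid unfolding grid_def by auto
lemma D_sub: "D \<subseteq> Gam \<times> Gam" using grid unfolding grid_def by auto
lemma op_e: "s \<in> Gam \<Longrightarrow> (e,s) \<in> D \<and> (s,e) \<in> D \<and> op s e = s \<and> op e s = s"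
  using grid unfolding grid_def by auto
lemma op_in: "(a,b) \<in> D \<Longrightarrow> op a b \<in> Gam" using grid unfolding grid_def by auto
lemma idem: "s \<in> Gam \<Longrightarrow> (s,s) \<in> D \<Longrightarrow> op s s = s \<Longrightarrow> s = e"
  using grid unfolding grid_def by auto
lemma zero_in: "g \<in> Gam \<Longrightarrow> 0 \<in> Rg g"
  using grad unfolding grid_grading_def k_submodule_def by auto
lemma one_in: "1 \<in> Rg e" using grad unfolding grid_grading_def by auto
lemma mul: "g \<in> Gam \<Longrightarrow> h \<in> Gam \<Longrightarrow> a \<in> Rg g \<Longrightarrow> b \<in> Rg h \<Longrightarrow> a * b \<noteq> 0
   \<Longrightarrow> (g,h) \<in> D \<and> a * b \<in> Rg (op g h)"
  using grad unfolding grid_grading_def by blast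
lemma ids: "internal_direct_sum Gam Rg" using grad unfolding grid_grading_def by auto
lemma pow_nz: "(x::'r) \<noteq> 0 \<Longrightarrow> x ^ n \<noteq> 0" using red unfolding reduced_def by blast

lemma zero_decomp:
  assumes "\<forall>h\<in>Gam. c h \<in> Rg h" "\<forall>h. h \<notin> Gam \<longrightarrow> c h = 0" "finite {h. c h \<noteq> 0}"
    "(\<Sum>h\<in>{h. c h \<noteq> 0}. c h) = 0"
  shows "c h = 0"
proof -
  have "c = (\<lambda>_. 0)"
    using ids[unfolded internal_direct_sum_def, rule_format, of 0] assms zero_in by auto
  thus ?thesis by simp
qed

lemma deg_unique:
  assumes "x \<noteq> 0" "a \<in> Gam" "b \<in> Gam" "x \<in> Rg a" "x \<in> Rg b"
  shows "a = b"
proof -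
  let ?c1 = "\<lambda>h. if h = a then x else 0" and ?c2 = "\<lambda>h. if h = b then x else 0"
  have s1: "{h. ?c1 h \<noteq> 0} = {a}" and s2: "{h. ?c2 h \<noteq> 0} = {b}" using assms by auto
  have "?c1 = ?c2"
    using ids[unfolded internal_direct_sum_def, rule_format, of x] assms zero_in
    unfolding s1 s2 by auto
  hence "?c1 a = ?c2 a" by metis
  thus ?thesis using assms(1) by (metis (full_types))
qed

lemma pw_deg:
  assumes "g \<in> Gam" "x \<in> Rg g" "x \<noteq> 0"
  shows "pw op e g n \<in> Gam \<and> x ^ n \<in> Rg (pw op e g n)"
proof (induction n)
  case 0 then show ?case using e_in one_in by simp
next
  case (Suc n)
  have "x ^ n * x \<noteq> 0" using pow_nz[OF assms(3), of "Suc n"] by (metis power_Suc2)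
  from mul[OF _ assms(1) _ assms(2) this] Suc op_in have "pw op e g (Suc n) \<in> Gam \<and> x ^ n * x \<in> Rg (pw op e g (Suc n))" by auto
  then show ?case by (metis power_Suc2)
qed

lemma pw_add:
  assumes "g \<in> Gam" "x \<in> Rg g" "x \<noteq> 0"
  shows "(pw op e g a, pw op e g b) \<in> D \<and> pw op e g (a + b) = op (pw op e g a) (pw op e g b)"
proof -
  have nz: "x ^ a * x ^ b \<noteq> 0" using pow_nz[OF assms(3), of "a+b"] by (simp add: power_add)
  from mul[OF _ _ _ _ nz] pw_deg[OF assms] have m: "(pw op e g a, pw op e g b) \<in> D"
    "x ^ (a+b) \<in> Rg (op (pw op e g a) (pw op e g b))" by (auto simp: power_add)
  have "pw op e g (a + b) = op (pw op e g a) (pw op e g b)"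
    using deg_unique[OF pow_nz[OF assms(3)] _ _ _ m(2)] pw_deg[OF assms] op_in[OF m(1)] by blast
  with m show ?thesis by blast
qed

lemma pw_X: "g \<in> Gam \<Longrightarrow> x \<in> Rg g \<Longrightarrow> x \<noteq> 0 \<Longrightarrow> pw op e g n \<in> X"
  using pw_deg[of g x n] pow_nz[of x n] by auto

lemma X_witness: "g \<in> X \<Longrightarrow> \<exists>x\<in>Rg g. x \<noteq> 0" using zero_in by auto

lemma ord_exists:
  assumes g: "g \<in> Gam" "x \<in> Rg g" "x \<noteq> 0"
  shows "\<exists>m>0. pw op e g m = e"
proof -
  let ?p = "pw op e g"
  have "range ?p \<subseteq> X" using pw_X[OF g] by auto
  hence "finite (range ?p)" using fin finite_subset by blast
  hence "\<not> inj ?p" using finite_imageD[of ?p UNIV] by auto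
  then obtain a0 b0 where ab0: "a0 \<noteq> b0" "?p a0 = ?p b0" unfolding inj_def by blast
  obtain a b where ab: "a < b" "?p a = ?p b"
  proof (cases "a0 < b0")
    case True thus ?thesis using ab0 that by blast
  next
    case False hence "b0 < a0" using ab0 by simp
    thus ?thesis using ab0 that[of b0 a0] by simp
  qed
  define p where "p = b - a"
  have p0: "p > 0" using ab p_def by simp
  have shift: "?p (n + p) = ?p n" if na: "n \<ge> a" for n
  proof -
    obtain k where n: "n = a + k" using le_Suc_ex[OF na] by blast
    have nb: "n + p = b + k" using n p_def ab by simp
    have "?p (n+p) = ?p (b+k)" using nb by simp
    also have "\<dots> = op (?p b) (?p k)" using pw_add[OF g, of b k] by simp
    also have "\<dots> = op (?p a) (?p k)" using ab by simp
    also have "\<dots> = ?p (a+k)" using pw_add[OF g, of a k] by simp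
    finally show ?thesis using n by simp
  qed
  have shiftj: "?p (n + j * p) = ?p n" if "n \<ge> a" for n j
  proof (induction j)
    case 0 then show ?case by simp
  next
    case (Suc j)
    have "?p (n + Suc j * p) = ?p ((n + j * p) + p)" by (simp add: algebra_simps)
    also have "\<dots> = ?p (n + j * p)" using shift that by simp
    finally show ?case using Suc by simp
  qed
  define m where "m = (a + 1) * p"
  have m0: "m > 0" using p0 m_def by simp
  have "(a+1)*1 \<le> (a+1)*p" using p0 by (intro mult_le_mono2) simp
  hence ma: "m \<ge> a" using m_def by simp
  have "?p (m + m) = ?p m" using shiftj[OF ma, of "a+1"] m_def by simp
  hence "op (?p m) (?p m) = ?p m" "(?p m, ?p m) \<in> D" using pw_add[OF g, of m m] by auto
  hence "?p m = e" using idem pw_deg[OF g, of m] by blast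
  thus ?thesis using m0 by blast
qed

lemma pw_mult_e: "g \<in> Gam \<Longrightarrow> x \<in> Rg g \<Longrightarrow> x \<noteq> 0 \<Longrightarrow> pw op e g m = e \<Longrightarrow> pw op e g (m * c) = e"
proof (induction c)
  case 0 then show ?case by simp
next
  case (Suc c)
  have "pw op e g (m * Suc c) = op (pw op e g (m*c)) (pw op e g m)"
    using pw_add[OF Suc.prems(1-3), of "m*c" m] by (simp add: algebra_simps)
  then show ?case using Suc op_e[OF e_in] by simp
qed

lemma pw_1: "g \<in> Gam \<Longrightarrow> pw op e g 1 = g" using op_e by simp

lemma part1:
  assumes gX: "g \<in> X"
  shows "grid_gen Gam e D op {g} \<subseteq> X \<and> finite_cyclic_grid_group e D op (grid_gen Gam e D op {g})"
proof -
  from gX obtain x where g: "g \<in> Gam" "x \<in> Rg g" "x \<noteq> 0" using X_witness by auto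
  obtain m where m: "m > 0" "pw op e g m = e" using ord_exists[OF g] by blast
  let ?p = "pw op e g"
  define P where "P = range ?p"
  have PX: "P \<subseteq> X" using pw_X[OF g] P_def by auto
  have PG: "P \<subseteq> Gam" using PX by auto
  have finP: "finite P" using PX fin finite_subset by blast
  have eP: "e \<in> P" unfolding P_def by (metis pw.simps(1) rangeI)
  have gP: "g \<in> P" unfolding P_def using pw_1[OF g(1)] by (metis rangeI)
  have PD: "P \<times> P \<subseteq> D"
  proof
    fix z assume "z \<in> P \<times> P"
    then obtain a b where "z = (?p a, ?p b)" unfolding P_def by auto
    thus "z \<in> D" using pw_add[OF g, of a b] by simp
  qed
  have Pcl: "op u v \<in> P" if uv: "u \<in> P" "v \<in> P" for u v
  proof -
    obtain a b where ab: "u = ?p a" "v = ?p b" using uv unfolding P_def by auto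
    have "op u v = ?p (a+b)" using pw_add[OF g, of a b] ab by simp
    thus ?thesis unfolding P_def by simp
  qed
  have sub: "subgrid Gam e D op P"
    by (rule subgridI[OF grid PG eP Pcl])
  have least: "P \<subseteq> U" if U: "subgrid Gam e D op U" "{g} \<subseteq> U" for U
  proof
    fix u assume "u \<in> P"
    then obtain n where u: "u = ?p n" unfolding P_def by auto
    have "?p n \<in> U"
    proof (induction n)
      case 0 then show ?case using subgridD(1)[OF U(1)] by simp
    next
      case (Suc n)
      have "(?p n, ?p 1) \<in> D" using pw_add[OF g, of n 1] by blast
      hence "(?p n, g) \<in> D" using pw_1[OF g(1)] by metis
      hence "op (?p n) g \<in> U" using subgridD(2)[OF U(1) Suc] U(2) by blast
      then show ?case by simp
    qed
    thus "u \<in> U" using u by simp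
  qed
  have gen: "grid_gen Gam e D op {g} = P"
    by (rule grid_gen_eqI[OF sub]) (use gP least in auto)
  have assoc: "op (op u v) w = op u (op v w)" if uvw: "u \<in> P" "v \<in> P" "w \<in> P" for u v w
  proof -
    obtain a b c where abc: "u = ?p a" "v = ?p b" "w = ?p c" using uvw unfolding P_def by auto
    have 1: "op (op u v) w = ?p (a+b+c)"
      using pw_add[OF g, of a b] pw_add[OF g, of "a+b" c] abc by simp
    have 2: "op u (op v w) = ?p (a+(b+c))"
      using pw_add[OF g, of b c] pw_add[OF g, of a "b+c"] abc by simp
    show ?thesis using 1 2 by (simp only: add.assoc)
  qed
  have linv: "\<exists>v\<in>P. op v u = e" if uP: "u \<in> P" for u
  proof -
    obtain a where a: "u = ?p a" using uP unfolding P_def by auto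
    have "a \<le> m * a" using m(1) by simp
    hence "m * a - a + a = m * a" by simp
    have "op (?p (m*a - a)) u = ?p (m*a - a + a)" using pw_add[OF g, of "m*a-a" a] a by simp
    also have "\<dots> = e" using pw_mult_e[OF g m(2)] \<open>m * a - a + a = m * a\<close> by simp
    finally have "op (?p (m*a - a)) u = e" .
    thus ?thesis unfolding P_def by blast
  qed
  have grp: "group (grid_monoid e op P)"
    by (rule grid_monoid_group) (use Pcl eP assoc op_e PG linv in auto)
  interpret G: group "grid_monoid e op P" by (rule grp)
  have "P \<subseteq> generate (grid_monoid e op P) {g}"
  proof
    fix u assume "u \<in> P"
    then obtain n where u: "u = ?p n" unfolding P_def by auto
    have "?p n \<in> generate (grid_monoid e op P) {g}"
    proof (induction n)
      case 0 then show ?case using generate.one[of "grid_monoid e op P" "{g}"] by (simp add: grid_monoid_def)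
    next
      case (Suc n)
      then show ?case using generate.eng[OF Suc generate.incl[of g "{g}" "grid_monoid e op P"]]
        by (simp add: grid_monoid_def)
    qed
    thus "u \<in> generate (grid_monoid e op P) {g}" using u by simp
  qed
  moreover have "generate (grid_monoid e op P) {g} \<subseteq> P"
    using G.generate_incl[of "{g}"] gP by (simp add: grid_monoid_def)
  ultimately have "P = generate (grid_monoid e op P) {g}" by blast
  hence "finite_cyclic_grid_group e D op P"
    unfolding finite_cyclic_grid_group_def grid_group_def using finP PD grp gP by blast
  thus ?thesis using gen PX by simp
qed


lemma pow_pred: "m > 0 \<Longrightarrow> (x::'r) ^ m = x ^ (m - 1) * x"
proof -
  assume "m > 0"
  then obtain k where "m = Suc k" using gr0_implies_Suc by blast
  thus ?thesis by (simp only: power_Suc2 diff_Suc_1)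
qed

lemma pow_pred': "m > 0 \<Longrightarrow> (x::'r) ^ m = x * x ^ (m - 1)"
proof -
  assume "m > 0"
  then obtain k where "m = Suc k" using gr0_implies_Suc by blast
  thus ?thesis by (simp only: power_Suc diff_Suc_1)
qed

lemma pw_e_deg:
  assumes g: "g \<in> Gam" "x \<in> Rg g" "x \<noteq> 0"
  obtains m where "m > 0" "pw op e g m = e" "x ^ m \<in> Rg e" "x ^ m \<noteq> 0"
  using ord_exists[OF g] pw_deg[OF g] pow_nz[OF g(3)] by metis

lemma hom_reg:
  assumes dom: "domain_sub (Rg e)"
    and g: "g \<in> Gam" "x \<in> Rg g" "x \<noteq> 0" and h: "h \<in> Gam" "y \<in> Rg h" "y \<noteq> 0"
  shows "x * y \<noteq> 0"
proof
  assume xy: "x * y = 0"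
  obtain m where m: "m > 0" "x ^ m \<in> Rg e" "x ^ m \<noteq> 0" using pw_e_deg[OF g] by metis
  obtain n where n: "n > 0" "y ^ n \<in> Rg e" "y ^ n \<noteq> 0" using pw_e_deg[OF h] by metis
  have "x ^ m * y ^ n \<noteq> 0" using dom m n unfolding domain_sub_def by blast
  moreover have "x ^ m * y ^ n = x ^ (m - 1) * (x * y) * y ^ (n - 1)"
    using pow_pred[OF m(1), of x] pow_pred'[OF n(1), of y] by (simp add: mult.assoc)
  ultimately show False using xy by simp
qed

lemma annih:
  assumes dom: "domain_sub (Rg e)" and z: "z \<in> Rg e" "z \<noteq> 0"
    and zy: "z * y = 0 \<or> y * z = 0"
  shows "y = 0"
proof -
  obtain c where c: "\<forall>h. h \<notin> Gam \<longrightarrow> c h = 0" "finite {h. c h \<noteq> 0}"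
    "\<forall>h\<in>Gam. c h \<in> Rg h" "y = (\<Sum>h\<in>{h. c h \<noteq> 0}. c h)"
    using ids[unfolded internal_direct_sum_def, rule_format, of y] by blast
  let ?S = "{h. c h \<noteq> 0}"
  have call: "c h = 0" for h
  proof (cases "z * y = 0")
    case True
    let ?c = "\<lambda>h. z * c h"
    have sub: "{h. ?c h \<noteq> 0} \<subseteq> ?S" by auto
    have "?c h = 0"
    proof (rule zero_decomp)
      show "\<forall>h\<in>Gam. ?c h \<in> Rg h"
      proof
        fix h assume hG: "h \<in> Gam"
        show "?c h \<in> Rg h"
        proof (cases "?c h = 0")
          case True thus ?thesis using zero_in[OF hG] by simp
        next
          case False
          thus ?thesis using mul[OF e_in hG z(1) bspec[OF c(3) hG] False] op_e[OF hG] by simp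
        qed
      qed
      show "\<forall>h. h \<notin> Gam \<longrightarrow> ?c h = 0" using c(1) by simp
      show "finite {h. ?c h \<noteq> 0}" using finite_subset[OF sub c(2)] .
      have "(\<Sum>h\<in>{h. ?c h \<noteq> 0}. ?c h) = (\<Sum>h\<in>?S. ?c h)"
        by (rule sum.mono_neutral_left[OF c(2) sub]) auto
      also have "\<dots> = z * y" using c(4) by (simp add: sum_distrib_left)
      finally show "(\<Sum>h\<in>{h. ?c h \<noteq> 0}. ?c h) = 0" using True by simp
    qed
    thus ?thesis
    proof (cases "h \<in> Gam")
      case True
      show ?thesis using hom_reg[OF dom e_in z(1) z(2) True bspec[OF c(3) True]] \<open>?c h = 0\<close> by blast
    qed (use c(1) in auto)
  next
    case False
    hence yz: "y * z = 0" using zy by simp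
    let ?c = "\<lambda>h. c h * z"
    have sub: "{h. ?c h \<noteq> 0} \<subseteq> ?S" by auto
    have "?c h = 0"
    proof (rule zero_decomp)
      show "\<forall>h\<in>Gam. ?c h \<in> Rg h"
      proof
        fix h assume hG: "h \<in> Gam"
        show "?c h \<in> Rg h"
        proof (cases "?c h = 0")
          case True thus ?thesis using zero_in[OF hG] by simp
        next
          case False
          thus ?thesis using mul[OF hG e_in bspec[OF c(3) hG] z(1) False] op_e[OF hG] by simp
        qed
      qed
      show "\<forall>h. h \<notin> Gam \<longrightarrow> ?c h = 0" using c(1) by simp
      show "finite {h. ?c h \<noteq> 0}" using finite_subset[OF sub c(2)] .
      have "(\<Sum>h\<in>{h. ?c h \<noteq> 0}. ?c h) = (\<Sum>h\<in>?S. ?c h)"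
        by (rule sum.mono_neutral_left[OF c(2) sub]) auto
      also have "\<dots> = y * z" using c(4) by (simp add: sum_distrib_right)
      finally show "(\<Sum>h\<in>{h. ?c h \<noteq> 0}. ?c h) = 0" using yz by simp
    qed
    thus ?thesis
    proof (cases "h \<in> Gam")
      case True
      show ?thesis using hom_reg[OF dom True bspec[OF c(3) True] _ e_in z(1) z(2)] \<open>?c h = 0\<close> by blast
    qed (use c(1) in auto)
  qed
  have "?S = {}" using call by simp
  thus ?thesis using c(4) by simp
qed

lemma reg:
  assumes dom: "domain_sub (Rg e)" and g: "g \<in> Gam" "x \<in> Rg g" "x \<noteq> 0"
    and xy: "x * y = 0 \<or> y * x = 0"
  shows "y = 0"
proof -
  obtain m where m: "m > 0" "x ^ m \<in> Rg e" "x ^ m \<noteq> 0" using pw_e_deg[OF g] by metis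
  have "x ^ m * y = 0 \<or> y * x ^ m = 0"
  proof (cases "x * y = 0")
    case True
    have "x ^ m * y = x ^ (m - 1) * (x * y)" using pow_pred[OF m(1), of x] by (simp add: mult.assoc)
    thus ?thesis using True by simp
  next
    case False
    hence "y * x = 0" using xy by simp
    moreover have "y * x ^ m = (y * x) * x ^ (m - 1)" using pow_pred'[OF m(1), of x] by (simp add: mult.assoc)
    ultimately show ?thesis by simp
  qed
  thus ?thesis using annih[OF dom m(2,3)] by blast
qed

lemma X_mul:
  assumes dom: "domain_sub (Rg e)" and "g \<in> X" "h \<in> X"
  shows "(g, h) \<in> D \<and> op g h \<in> X"
proof -
  obtain x y where x: "g \<in> Gam" "x \<in> Rg g" "x \<noteq> 0" and y: "h \<in> Gam" "y \<in> Rg h" "y \<noteq> 0"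
    using assms X_witness by blast
  have "x * y \<noteq> 0" using hom_reg[OF dom x y] .
  from mul[OF x(1) y(1) x(2) y(2) this] this op_in show ?thesis by blast
qed

lemma e_X: "domain_sub (Rg e) \<Longrightarrow> e \<in> X"
  using one_in e_in unfolding domain_sub_def by auto

lemma part2:
  assumes dom: "domain_sub (Rg e)"
  shows "grid_gen Gam e D op X = X \<and> grid_group e D op X
        \<and> ((\<forall>a b::'r. a * b = b * a) \<longrightarrow> comm_group (grid_monoid e op X))"
proof -
  have XG: "X \<subseteq> Gam" by auto
  have cl: "\<And>g h. g \<in> X \<Longrightarrow> h \<in> X \<Longrightarrow> op g h \<in> X" using X_mul[OF dom] by blast
  have sub: "subgrid Gam e D op X" by (rule subgridI[OF grid XG e_X[OF dom]]) (use cl in blast)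
  have gen: "grid_gen Gam e D op X = X" by (rule grid_gen_eqI[OF sub]) auto
  have XD: "X \<times> X \<subseteq> D" using X_mul[OF dom] by blast
  have assoc: "op (op g h) k = op g (op h k)" if ghk: "g \<in> X" "h \<in> X" "k \<in> X" for g h k
  proof -
    obtain x where x: "g \<in> Gam" "x \<in> Rg g" "x \<noteq> 0" using ghk(1) X_witness by blast
    obtain y where y: "h \<in> Gam" "y \<in> Rg h" "y \<noteq> 0" using ghk(2) X_witness by blast
    obtain z where z: "k \<in> Gam" "z \<in> Rg k" "z \<noteq> 0" using ghk(3) X_witness by blast
    have xy: "x * y \<noteq> 0" using hom_reg[OF dom x y] .
    have yz: "y * z \<noteq> 0" using hom_reg[OF dom y z] .
    have xyR: "x * y \<in> Rg (op g h)" "op g h \<in> Gam" using mul[OF x(1) y(1) x(2) y(2) xy] op_in by auto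
    have yzR: "y * z \<in> Rg (op h k)" "op h k \<in> Gam" using mul[OF y(1) z(1) y(2) z(2) yz] op_in by auto
    have xyz: "x * y * z \<noteq> 0" using hom_reg[OF dom xyR(2) xyR(1) xy z] .
    have 1: "x * y * z \<in> Rg (op (op g h) k)" "op (op g h) k \<in> Gam"
      using mul[OF xyR(2) z(1) xyR(1) z(2) xyz] op_in by auto
    have xyz': "x * (y * z) \<noteq> 0" using xyz by (simp add: mult.assoc)
    have 2: "x * (y * z) \<in> Rg (op g (op h k))" "op g (op h k) \<in> Gam"
      using mul[OF x(1) yzR(2) x(2) yzR(1) xyz'] op_in by auto
    show ?thesis using deg_unique[OF xyz 1(2) 2(2) 1(1)] 2(1) by (simp add: mult.assoc)
  qed
  have linv: "\<exists>v\<in>X. op v g = e" if gX: "g \<in> X" for g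
  proof -
    obtain x where x: "g \<in> Gam" "x \<in> Rg g" "x \<noteq> 0" using gX X_witness by blast
    obtain m where m: "m > 0" "pw op e g m = e" using ord_exists[OF x] by blast
    have "op (pw op e g (m - 1)) g = pw op e g (Suc (m - 1))" by simp
    also have "\<dots> = e" using m by simp
    finally show ?thesis using pw_X[OF x] by blast
  qed
  have grp: "group (grid_monoid e op X)"
    by (rule grid_monoid_group) (use cl e_X[OF dom] assoc op_e XG linv in auto)
  have comm: "comm_group (grid_monoid e op X)" if cm: "\<forall>a b::'r. a * b = b * a"
  proof (rule grid_monoid_comm_group)
    show "\<And>x y. x \<in> X \<Longrightarrow> y \<in> X \<Longrightarrow> op x y \<in> X" by (rule cl)
    show "e \<in> X" by (rule e_X[OF dom])
    show "\<And>x y z. x \<in> X \<Longrightarrow> y \<in> X \<Longrightarrow> z \<in> X \<Longrightarrow> op (op x y) z = op x (op y z)" by (rule assoc)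
    show "\<And>x. x \<in> X \<Longrightarrow> op e x = x" using op_e by blast
    show "\<And>x. x \<in> X \<Longrightarrow> \<exists>y\<in>X. op y x = e" by (rule linv)
    fix g h assume gh: "g \<in> X" "h \<in> X"
    obtain x where x: "g \<in> Gam" "x \<in> Rg g" "x \<noteq> 0" using gh(1) X_witness by blast
    obtain y where y: "h \<in> Gam" "y \<in> Rg h" "y \<noteq> 0" using gh(2) X_witness by blast
    have xy: "x * y \<noteq> 0" using hom_reg[OF dom x y] .
    have yx: "y * x \<noteq> 0" using hom_reg[OF dom y x] .
    have 1: "x * y \<in> Rg (op g h)" "op g h \<in> Gam" using mul[OF x(1) y(1) x(2) y(2) xy] op_in by auto
    have 2: "y * x \<in> Rg (op h g)" "op h g \<in> Gam" using mul[OF y(1) x(1) y(2) x(2) yx] op_in by auto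
    have "x * y = y * x" using cm by blast
    thus "op g h = op h g" using deg_unique[OF xy 1(2) 2(2) 1(1)] 2(1) by simp
  qed
  show ?thesis using gen grp XD comm unfolding grid_group_def by blast
qed

lemma field_dom: "field_sub (Rg e) \<Longrightarrow> domain_sub (Rg e)"
  unfolding field_sub_def domain_sub_def
proof (intro conjI ballI impI)
  assume f: "(1::'r) \<noteq> 0 \<and> (\<forall>a\<in>Rg e. \<forall>b\<in>Rg e. a * b = b * a) \<and> (\<forall>a\<in>Rg e. a \<noteq> 0 \<longrightarrow> (\<exists>b\<in>Rg e. a * b = 1))"
  show "(1::'r) \<noteq> 0" using f by blast
  fix a b assume ab: "a \<in> Rg e" "b \<in> Rg e" "a * b = 0"
  show "a = 0 \<or> b = 0"
  proof (cases "a = 0")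
    case False
    then obtain c where c: "c \<in> Rg e" "a * c = 1" using f ab by blast
    have "c * a = 1" using f c ab by metis
    hence "b = c * (a * b)" by (simp add: mult.assoc[symmetric])
    thus ?thesis using ab by simp
  qed simp
qed

lemma inv_pw:
  assumes dom: "domain_sub (Rg e)" and x: "g \<in> Gam" "x \<in> Rg g" "x \<noteq> 0"
    and m: "m > 0" "pw op e g m = e"
  shows "inv\<^bsub>grid_monoid e op X\<^esub> g = pw op e g (m - 1)"
proof -
  have grp: "group (grid_monoid e op X)" using part2[OF dom] unfolding grid_group_def by blast
  have "op (pw op e g (m - 1)) g = pw op e g (Suc (m - 1))" by simp
  also have "\<dots> = e" using m by simp
  finally have 1: "op (pw op e g (m - 1)) g = e" .
  show ?thesis
    by (rule group.inv_equality[OF grp]) (use 1 pw_X[OF x] x in \<open>auto simp: grid_monoid_def\<close>)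
qed

lemma part3_inv:
  assumes fld: "field_sub (Rg e)" and x: "g \<in> Gam" "x \<in> Rg g" "x \<noteq> 0"
  shows "\<exists>y. x * y = 1 \<and> y * x = 1 \<and> y \<in> Rg (inv\<^bsub>grid_monoid e op X\<^esub> g)"
proof -
  have dom: "domain_sub (Rg e)" by (rule field_dom[OF fld])
  obtain m where m: "m > 0" "pw op e g m = e" "x ^ m \<in> Rg e" "x ^ m \<noteq> 0" using pw_e_deg[OF x] by metis
  obtain c where c: "c \<in> Rg e" "x ^ m * c = 1" using fld m unfolding field_sub_def by blast
  have c2: "c * x ^ m = 1" using fld c m unfolding field_sub_def by metis
  define y where "y = x ^ (m - 1) * c"
  have xy: "x * y = 1" using c(2) pow_pred'[OF m(1), of x] unfolding y_def by (simp add: mult.assoc)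
  have lx: "(c * x ^ (m - 1)) * x = 1" using c2 pow_pred[OF m(1), of x] by (simp add: mult.assoc)
  have "c * x ^ (m - 1) = (c * x ^ (m - 1)) * (x * y)" using xy by simp
  also have "\<dots> = y" using lx by (simp add: mult.assoc[symmetric])
  finally have yx: "y * x = 1" using lx by simp
  have one0: "(1::'r) \<noteq> 0" using fld unfolding field_sub_def by blast
  have ynz: "y \<noteq> 0" using xy one0 by auto
  have "y \<in> Rg (op (pw op e g (m - 1)) e)"
    using mul[OF conjunct1[OF pw_deg[OF x]] e_in conjunct2[OF pw_deg[OF x]] c(1)] ynz unfolding y_def by blast
  hence "y \<in> Rg (pw op e g (m - 1))" using op_e conjunct1[OF pw_deg[OF x]] by metis
  thus ?thesis using xy yx inv_pw[OF dom x m(1,2)] by auto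
qed

lemma part3_basis:
  assumes fld: "field_sub (Rg e)" and gX: "g \<in> X"
  shows "\<exists>b\<in>Rg g. (\<forall>a\<in>Rg e. a * b = 0 \<longrightarrow> a = 0) \<and> (\<forall>x\<in>Rg g. \<exists>a\<in>Rg e. x = a * b)"
proof -
  have dom: "domain_sub (Rg e)" by (rule field_dom[OF fld])
  obtain b where b: "g \<in> Gam" "b \<in> Rg g" "b \<noteq> 0" using gX X_witness by blast
  obtain bi where bi: "b * bi = 1" "bi * b = 1" "bi \<in> Rg (inv\<^bsub>grid_monoid e op X\<^esub> g)"
    using part3_inv[OF fld b] by blast
  have grp: "group (grid_monoid e op X)" using part2[OF dom] unfolding grid_group_def by blast
  have gc: "g \<in> carrier (grid_monoid e op X)" using gX by (simp add: grid_monoid_def)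
  have ic: "inv\<^bsub>grid_monoid e op X\<^esub> g \<in> X"
    using group.inv_closed[OF grp gc] by (simp add: grid_monoid_def)
  have ri: "op g (inv\<^bsub>grid_monoid e op X\<^esub> g) = e"
    using group.r_inv[OF grp gc] by (simp add: grid_monoid_def)
  have "\<forall>x\<in>Rg g. \<exists>a\<in>Rg e. x = a * b"
  proof
    fix x assume xR: "x \<in> Rg g"
    have "x * bi \<in> Rg e"
    proof (cases "x * bi = 0")
      case True thus ?thesis using zero_in[OF e_in] by simp
    next
      case False
      have "x * bi \<in> Rg (op g (inv\<^bsub>grid_monoid e op X\<^esub> g))"
        using mul[OF b(1) _ xR bi(3) False] ic by blast
      thus ?thesis using ri by simp
    qed
    moreover have "x = (x * bi) * b" using bi(2) by (simp add: mult.assoc)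
    ultimately show "\<exists>a\<in>Rg e. x = a * b" by blast
  qed
  moreover have "\<forall>a\<in>Rg e. a * b = 0 \<longrightarrow> a = 0" using reg[OF dom b] by blast
  ultimately show ?thesis using b(2) by blast
qed

end

theorem mainTheorem4:
  fixes sm :: "'k::comm_ring_1 \<Rightarrow> 'r::ring_1 \<Rightarrow> 'r"
    and Gam :: "'g set" and e :: 'g and D :: "('g \<times> 'g) set" and op :: "'g \<Rightarrow> 'g \<Rightarrow> 'g"
    and Rg :: "'g \<Rightarrow> 'r set"
  assumes alg: "k_algebra sm"
    and red: "reduced TYPE('r)"
    and grad: "grid_grading sm Gam e D op Rg"
    and fin: "finite {g\<in>Gam. Rg g \<noteq> {0}}"
  defines "X \<equiv> {g\<in>Gam. Rg g \<noteq> {0}}"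
  shows
    "(\<forall>g\<in>X. grid_gen Gam e D op {g} \<subseteq> X \<and> finite_cyclic_grid_group e D op (grid_gen Gam e D op {g}))
     \<and> (domain_sub (Rg e) \<longrightarrow>
          (\<forall>g\<in>Gam. \<forall>x\<in>Rg g. x \<noteq> 0 \<longrightarrow> (\<forall>y. (x * y = 0 \<or> y * x = 0) \<longrightarrow> y = 0))
        \<and> grid_gen Gam e D op X = X \<and> grid_group e D op X
        \<and> ((\<forall>a b::'r. a * b = b * a) \<longrightarrow> comm_group (grid_monoid e op X)))
     \<and> (field_sub (Rg e) \<longrightarrow>
          (\<forall>g\<in>Gam. \<forall>x\<in>Rg g. x \<noteq> 0 \<longrightarrow>
              (\<exists>y. x * y = 1 \<and> y * x = 1 \<and> y \<in> Rg (inv\<^bsub>grid_monoid e op X\<^esub> g)))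
        \<and> (\<forall>g\<in>X. \<exists>b\<in>Rg g. (\<forall>a\<in>Rg e. a * b = 0 \<longrightarrow> a = 0) \<and> (\<forall>x\<in>Rg g. \<exists>a\<in>Rg e. x = a * b)))"
proof -
  interpret GG sm Gam e D op Rg using red grad fin by unfold_locales
  have 1: "\<forall>g\<in>X. grid_gen Gam e D op {g} \<subseteq> X \<and> finite_cyclic_grid_group e D op (grid_gen Gam e D op {g})"
    unfolding X_def using part1 by blast
  have 2: "domain_sub (Rg e) \<longrightarrow>
          (\<forall>g\<in>Gam. \<forall>x\<in>Rg g. x \<noteq> 0 \<longrightarrow> (\<forall>y. (x * y = 0 \<or> y * x = 0) \<longrightarrow> y = 0))
        \<and> grid_gen Gam e D op X = X \<and> grid_group e D op X
        \<and> ((\<forall>a b::'r. a * b = b * a) \<longrightarrow> comm_group (grid_monoid e op X))"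
    unfolding X_def using reg part2 by blast
  have 3: "field_sub (Rg e) \<longrightarrow>
          (\<forall>g\<in>Gam. \<forall>x\<in>Rg g. x \<noteq> 0 \<longrightarrow>
              (\<exists>y. x * y = 1 \<and> y * x = 1 \<and> y \<in> Rg (inv\<^bsub>grid_monoid e op X\<^esub> g)))
        \<and> (\<forall>g\<in>X. \<exists>b\<in>Rg g. (\<forall>a\<in>Rg e. a * b = 0 \<longrightarrow> a = 0) \<and> (\<forall>x\<in>Rg g. \<exists>a\<in>Rg e. x = a * b))"
    unfolding X_def using part3_inv part3_basis by blast
  show ?thesis using 1 2 3 by blast
qed

end
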